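(* Let $G$ be a maximal subgroup of a completely simple semigroup $S$. Let $\sigma : X^+ \to G$ be a semigroup choice of generators for $G$ and $\tau : Y^+ \to S$ a semigroup choice of generators for $S$ such that $X \subseteq Y$ and $\sigma$ is the restriction of $\tau$ to $X^+$. Then $L_\sigma(G) = L_\tau(S) \cap \hat{X}^*$.
   Context: Maps are written on the right. $X^*$, $X^+$ are the free monoid and free semigroup on $X$. A semigroup is completely simple if it has no proper ideals and has a primitive idempotent (an idempotent $e$ with: every idempotent $f$ such that $ef = fe = f$ equals $e$). A maximal subgroup is a subsemigroup which is a group under the inherited multiplication and is contained in no larger such. For a monoid $M$ and surjective morphism $\sigma : X^* \to M$, let $\overline{X} = \{\overline{x} : x \in X\}$ be new symbols ($\overline{Y}$ similarly, with $\overline{X} \subseteq \overline{Y}$ when $X \subseteq Y$), $\hat{X} = X \cup \overline{X}$; the loop automaton has vertex set $M$, for each $a \in M$, $x \in X$ an edge $a \to a(x\sigma)$ labelled $x$ and an edge $a(x\sigma) \to a$ labelled $\overline{x}$; the loop problem $L_\sigma(M) \subseteq \hat{X}^*$ is the set of labels of paths from the identity to the identity. For a semigroup $T$ with surjective morphism $\sigma : X^+ \to T$, $T^1$ denotes $T$ with a new identity adjoined (even if $T$ already has one), $\sigma^1 : X^* \to T^1$ the extension, and $L_\sigma(T) := L_{\sigma^1}(T^1)$ (this applies to both $G$ and $S$ here). *)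

theory Defs
  imports Main
begin

definition semigroup_on :: "'a set \<Rightarrow> ('a \<Rightarrow> 'a \<Rightarrow> 'a) \<Rightarrow> bool" where
  "semigroup_on S m \<longleftrightarrow> (\<forall>a\<in>S. \<forall>b\<in>S. m a b \<in> S) \<and>
     (\<forall>a\<in>S. \<forall>b\<in>S. \<forall>c\<in>S. m (m a b) c = m a (m b c))"

definition is_ideal :: "'a set \<Rightarrow> ('a \<Rightarrow> 'a \<Rightarrow> 'a) \<Rightarrow> 'a set \<Rightarrow> bool" where
  "is_ideal S m I \<longleftrightarrow> I \<noteq> {} \<and> I \<subseteq> S \<and> (\<forall>s\<in>S. \<forall>i\<in>I. m s i \<in> I \<and> m i s \<in> I)"

definition primitive_idempotent :: "'a set \<Rightarrow> ('a \<Rightarrow> 'a \<Rightarrow> 'a) \<Rightarrow> 'a \<Rightarrow> bool" where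
  "primitive_idempotent S m e \<longleftrightarrow> e \<in> S \<and> m e e = e \<and>
     (\<forall>f\<in>S. m f f = f \<and> m e f = f \<and> m f e = f \<longrightarrow> f = e)"

definition completely_simple :: "'a set \<Rightarrow> ('a \<Rightarrow> 'a \<Rightarrow> 'a) \<Rightarrow> bool" where
  "completely_simple S m \<longleftrightarrow> semigroup_on S m \<and>
     (\<forall>I. is_ideal S m I \<longrightarrow> I = S) \<and> (\<exists>e. primitive_idempotent S m e)"

definition subgroup_in :: "'a set \<Rightarrow> ('a \<Rightarrow> 'a \<Rightarrow> 'a) \<Rightarrow> 'a set \<Rightarrow> bool" where
  "subgroup_in S m H \<longleftrightarrow> H \<subseteq> S \<and> (\<forall>a\<in>H. \<forall>b\<in>H. m a b \<in> H) \<and>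
     (\<exists>e\<in>H. (\<forall>a\<in>H. m e a = a \<and> m a e = a) \<and> (\<forall>a\<in>H. \<exists>b\<in>H. m a b = e \<and> m b a = e))"

definition maximal_subgroup :: "'a set \<Rightarrow> ('a \<Rightarrow> 'a \<Rightarrow> 'a) \<Rightarrow> 'a set \<Rightarrow> bool" where
  "maximal_subgroup S m G \<longleftrightarrow> subgroup_in S m G \<and>
     (\<forall>H. subgroup_in S m H \<and> G \<subseteq> H \<longrightarrow> H = G)"

fun word_eval :: "('a \<Rightarrow> 'a \<Rightarrow> 'a) \<Rightarrow> ('x \<Rightarrow> 'a) \<Rightarrow> 'x list \<Rightarrow> 'a" where
  "word_eval m f [x] = f x"
| "word_eval m f (x # y # ws) = m (f x) (word_eval m f (y # ws))"
| "word_eval m f [] = undefined"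

definition semigroup_generators :: "'a set \<Rightarrow> ('a \<Rightarrow> 'a \<Rightarrow> 'a) \<Rightarrow> 'x set \<Rightarrow> ('x \<Rightarrow> 'a) \<Rightarrow> bool" where
  "semigroup_generators T m X f \<longleftrightarrow> (\<forall>x\<in>X. f x \<in> T) \<and>
     {word_eval m f w | w. w \<noteq> [] \<and> set w \<subseteq> X} = T"

datatype 'x hat = Pos 'x | Bar 'x

definition hat_set :: "'x set \<Rightarrow> 'x hat set" where
  "hat_set X = Pos ` X \<union> Bar ` X"

text \<open>T^1: T with a new identity adjoined, modelled as None.\<close>
definition adj1 :: "'a set \<Rightarrow> 'a option set" where
  "adj1 T = insert None (Some ` T)"

fun mult1 :: "('a \<Rightarrow> 'a \<Rightarrow> 'a) \<Rightarrow> 'a option \<Rightarrow> 'a option \<Rightarrow> 'a option" where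
  "mult1 m None b = b"
| "mult1 m a None = a"
| "mult1 m (Some a) (Some b) = Some (m a b)"

definition loop_edge :: "'a set \<Rightarrow> ('a \<Rightarrow> 'a \<Rightarrow> 'a) \<Rightarrow> 'x set \<Rightarrow> ('x \<Rightarrow> 'a)
    \<Rightarrow> 'a option \<Rightarrow> 'x hat \<Rightarrow> 'a option \<Rightarrow> bool" where
  "loop_edge T m X f a l b \<longleftrightarrow> a \<in> adj1 T \<and> b \<in> adj1 T \<and>
     (case l of Pos x \<Rightarrow> x \<in> X \<and> b = mult1 m a (Some (f x))
              | Bar x \<Rightarrow> x \<in> X \<and> a = mult1 m b (Some (f x)))"

inductive loop_path :: "'a set \<Rightarrow> ('a \<Rightarrow> 'a \<Rightarrow> 'a) \<Rightarrow> 'x set \<Rightarrow> ('x \<Rightarrow> 'a)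
    \<Rightarrow> 'a option \<Rightarrow> 'x hat list \<Rightarrow> 'a option \<Rightarrow> bool"
  for T m X f where
  nil: "a \<in> adj1 T \<Longrightarrow> loop_path T m X f a [] a"
| cons: "loop_edge T m X f a l b \<Longrightarrow> loop_path T m X f b w c \<Longrightarrow> loop_path T m X f a (l # w) c"

text \<open>Loop problem L(T) := L(T^1): labels of paths from the identity of T^1 to itself.\<close>
definition loop_problem :: "'a set \<Rightarrow> ('a \<Rightarrow> 'a \<Rightarrow> 'a) \<Rightarrow> 'x set \<Rightarrow> ('x \<Rightarrow> 'a) \<Rightarrow> 'x hat list set" where
  "loop_problem T m X f = {w. loop_path T m X f None w None}"

end

theory Submission
  imports Defs
begin

lemma all_idem_primitive:
  assumes cs: "completely_simple S m" and fS: "f \<in> S" and ff: "m f f = f"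
  shows "\<forall>g\<in>S. m g g = g \<and> m f g = g \<and> m g f = g \<longrightarrow> g = f"
proof -
  from cs have sg: "semigroup_on S m" and ideal: "\<forall>I. is_ideal S m I \<longrightarrow> I = S"
    and "\<exists>e. primitive_idempotent S m e" by (auto simp: completely_simple_def)
  then obtain e0 where e0S: "e0 \<in> S" and ee: "m e0 e0 = e0"
    and prim: "\<forall>g\<in>S. m g g = g \<and> m e0 g = g \<and> m g e0 = g \<longrightarrow> g = e0"
    by (auto simp: primitive_idempotent_def)
  have C: "\<And>a b. a\<in>S \<Longrightarrow> b\<in>S \<Longrightarrow> m a b \<in> S" using sg by (simp add: semigroup_on_def)
  have A: "\<And>a b c. a\<in>S \<Longrightarrow> b\<in>S \<Longrightarrow> c\<in>S \<Longrightarrow> m (m a b) c = m a (m b c)"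
    using sg by (simp add: semigroup_on_def)
  define I where "I = {m (m x e0) y | x y. x \<in> S \<and> y \<in> S}"
  have "is_ideal S m I"
    unfolding is_ideal_def
  proof (intro conjI ballI)
    show "I \<noteq> {}" using e0S unfolding I_def by blast
    show "I \<subseteq> S" using C e0S unfolding I_def by blast
  next
    fix s i assume s: "s \<in> S" and i: "i \<in> I"
    then obtain x y where x: "x\<in>S" and y: "y\<in>S" and i_eq: "i = m (m x e0) y"
      unfolding I_def by blast
    have "m s i = m (m (m s x) e0) y" using s x y e0S by (simp add: i_eq A C)
    then show "m s i \<in> I" using s x y C unfolding I_def by blast
  next
    fix s i assume s: "s \<in> S" and i: "i \<in> I"
    then obtain x y where x: "x\<in>S" and y: "y\<in>S" and i_eq: "i = m (m x e0) y"
      unfolding I_def by blast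
    have "m i s = m (m x e0) (m y s)" using s x y e0S by (simp add: i_eq A C)
    then show "m i s \<in> I" using s x y C unfolding I_def by blast
  qed
  hence "I = S" using ideal by blast
  then obtain c d where c: "c\<in>S" and d: "d\<in>S" and fcd: "f = m (m c e0) d"
    using fS unfolding I_def by blast
  have cd1: "m c (m e0 d) = f" using fcd A c d e0S by simp
  have cd2: "m c (m e0 (m d z)) = m f z" if "z \<in> S" for z
    using that cd1 A c d e0S C by metis
  have ee2: "m e0 (m e0 z) = m e0 z" if "z \<in> S" for z using that A e0S ee by metis
  have ff2: "m f (m f z) = m f z" if "z \<in> S" for z using that A fS ff by metis
  define a where "a = m f (m c e0)"
  define b where "b = m e0 (m d f)"
  have aS: "a \<in> S" unfolding a_def using C fS c e0S by blast
  have bS: "b \<in> S" unfolding b_def using C fS d e0S by blast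
  have ab: "m a b = f" unfolding a_def b_def using fS c d e0S
    by (simp add: A C ee2 cd2 ff)
  have ba0: "m b a = m e0 (m d (m f (m c e0)))" unfolding a_def b_def using fS c d e0S
    by (simp add: A C ff2)
  have "m (m b a) (m b a) = m b a" unfolding ba0 using fS c d e0S
    by (simp add: A C ee2 cd2 ff2)
  moreover have "m e0 (m b a) = m b a" unfolding ba0 using fS c d e0S
    by (simp add: A C ee2)
  moreover have "m (m b a) e0 = m b a" unfolding ba0 using fS c d e0S
    by (simp add: A C ee)
  ultimately have ba: "m b a = e0" using prim C aS bS by blast
  have ab2: "m a (m b z) = m f z" if "z \<in> S" for z using that A aS bS ab by metis
  have ba2: "m b (m a z) = m e0 z" if "z \<in> S" for z using that A aS bS ba by metis
  show ?thesis
  proof (intro ballI impI)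
    fix g assume gS: "g \<in> S" and gg: "m g g = g \<and> m f g = g \<and> m g f = g"
    have gg2: "m g (m g z) = m g z" if "z \<in> S" for z using that A gS gg by metis
    have fg2: "m f (m g z) = m g z" if "z \<in> S" for z using that A gS fS gg by metis
    have gf2: "m g (m f z) = m g z" if "z \<in> S" for z using that A gS fS gg by metis
    let ?g' = "m b (m g a)"
    have "m ?g' ?g' = ?g'" using aS bS gS by (simp add: A C ab2 gf2 gg2)
    moreover have "m e0 ?g' = ?g'" using aS bS gS by (simp add: A C ab2 fg2 flip: ba)
    moreover have "m ?g' e0 = ?g'" using aS bS gS by (simp add: A C ab2 gf2 flip: ba)
    ultimately have "?g' = e0" using prim C aS bS gS by blast
    have "f = m (m a b) (m a b)" using ab ff by simp
    also have "\<dots> = m a (m (m b a) b)" using A aS bS C by simp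
    also have "\<dots> = m a (m ?g' b)" using \<open>?g' = e0\<close> ba by simp
    also have "\<dots> = m f (m g f)" using aS bS gS fS by (simp add: A C ab2 ab)
    also have "\<dots> = g" using gg by simp
    finally show "g = f" by simp
  qed
qed


lemma eSe_in_G:
  assumes cs: "completely_simple S m" and mx: "maximal_subgroup S m G"
  obtains e where "e \<in> G" "m e e = e" "\<forall>g\<in>G. m e g = g \<and> m g e = g"
    "\<forall>x\<in>S. m (m e x) e \<in> G"
proof -
  from cs have sg: "semigroup_on S m" and ideal: "\<forall>I. is_ideal S m I \<longrightarrow> I = S"
    by (auto simp: completely_simple_def)
  have C: "\<And>a b. a\<in>S \<Longrightarrow> b\<in>S \<Longrightarrow> m a b \<in> S" using sg by (simp add: semigroup_on_def)
  have A: "\<And>a b c. a\<in>S \<Longrightarrow> b\<in>S \<Longrightarrow> c\<in>S \<Longrightarrow> m (m a b) c = m a (m b c)"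
    using sg by (simp add: semigroup_on_def)
  from mx have GS: "G \<subseteq> S" and maxG: "\<forall>H. subgroup_in S m H \<and> G \<subseteq> H \<longrightarrow> H = G"
    and "\<exists>e\<in>G. (\<forall>a\<in>G. m e a = a \<and> m a e = a)"
    by (auto simp: maximal_subgroup_def subgroup_in_def)
  then obtain e where eG: "e \<in> G" and eid: "\<forall>a\<in>G. m e a = a \<and> m a e = a" by blast
  have eS: "e \<in> S" using eG GS by blast
  have ee: "m e e = e" using eid eG by blast
  have primE: "\<forall>g\<in>S. m g g = g \<and> m e g = g \<and> m g e = g \<longrightarrow> g = e"
    using all_idem_primitive[OF cs eS ee] by blast
  have ee2: "m e (m e z) = m e z" if "z \<in> S" for z using that A eS ee by metis
  define H where "H = {m (m e x) e | x. x \<in> S}"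
  have HS: "H \<subseteq> S" unfolding H_def using C eS by blast
  have Hform: "\<And>z. z \<in> H \<Longrightarrow> z \<in> S \<and> m e z = z \<and> m z e = z"
    unfolding H_def using C eS by (auto simp: A C ee2 ee)
  have clos: "\<forall>a\<in>H. \<forall>b\<in>H. m a b \<in> H"
  proof (intro ballI)
    fix a b assume "a \<in> H" "b \<in> H"
    then obtain x y where x: "x\<in>S" "a = m (m e x) e" and y: "y \<in> S" "b = m (m e y) e"
      unfolding H_def by blast
    have "m a b = m (m e (m x (m e y))) e" using x y eS by (simp add: A C ee2)
    then show "m a b \<in> H" unfolding H_def using x y eS C by blast
  qed
  have eH: "e \<in> H" unfolding H_def using eS ee by (auto intro!: exI[of _ e])
  have idH: "\<forall>a\<in>H. m e a = a \<and> m a e = a" using Hform by blast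
  have invH: "\<forall>z\<in>H. \<exists>b\<in>H. m z b = e \<and> m b z = e"
  proof
    fix z assume zH: "z \<in> H"
    then have zS: "z \<in> S" and ez: "m e z = z" and ze: "m z e = z" using Hform by auto
    define I where "I = {m (m x z) y | x y. x \<in> S \<and> y \<in> S}"
    have "is_ideal S m I"
      unfolding is_ideal_def
    proof (intro conjI ballI)
      show "I \<noteq> {}" using zS unfolding I_def by blast
      show "I \<subseteq> S" using C zS unfolding I_def by blast
    next
      fix s i assume s: "s \<in> S" and i: "i \<in> I"
      then obtain x y where x: "x\<in>S" and y: "y\<in>S" and i_eq: "i = m (m x z) y"
        unfolding I_def by blast
      have "m s i = m (m (m s x) z) y" using s x y zS by (simp add: i_eq A C)
      then show "m s i \<in> I" using s x y C unfolding I_def by blast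
    next
      fix s i assume s: "s \<in> S" and i: "i \<in> I"
      then obtain x y where x: "x\<in>S" and y: "y\<in>S" and i_eq: "i = m (m x z) y"
        unfolding I_def by blast
      have "m i s = m (m x z) (m y s)" using s x y zS by (simp add: i_eq A C)
      then show "m i s \<in> I" using s x y C unfolding I_def by blast
    qed
    hence "I = S" using ideal by blast
    then obtain c d where c: "c\<in>S" and d: "d\<in>S" and ecd: "e = m (m c z) d"
      using eS unfolding I_def by blast
    define u where "u = m (m e c) e"
    define v where "v = m (m e d) e"
    have uS: "u \<in> S" and vS: "v \<in> S" unfolding u_def v_def using C eS c d by auto
    have ue: "m u e = u" and ev: "m e v = v" and ve: "m v e = v"
      unfolding u_def v_def using eS c d by (simp_all add: A C ee2 ee)
    have ez2: "m e (m z w) = m z w" if "w \<in> S" for w using that A eS zS ez by metis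
    have ze2: "m z (m e w) = m z w" if "w \<in> S" for w using that A eS zS ze by metis
    have cd1: "m c (m z d) = e" using ecd A c d zS by simp
    have cd2: "m c (m z (m d w)) = m e w" if "w \<in> S" for w using that A c d zS cd1 C by metis
    have uzv: "m u (m z v) = e" unfolding u_def v_def using eS c d zS
      by (simp add: A C ee2 ez2 ze2 cd2 ee)
    have uzv2: "m u (m z (m v w)) = m e w" if "w \<in> S" for w using that A uS vS zS uzv C by metis
    have ue2: "m u (m e w) = m u w" if "w \<in> S" for w using that A uS eS ue by metis
    have ve2: "m v (m e w) = m v w" if "w \<in> S" for w using that A vS eS ve by metis
    have ev2: "m e (m v w) = m v w" if "w \<in> S" for w using that A vS eS ev by metis
    have "m (m z (m v u)) (m z (m v u)) = m z (m v u)" using zS uS vS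
      by (simp add: A C uzv2 ve2)
    moreover have "m e (m z (m v u)) = m z (m v u)" using zS uS vS by (simp add: A C ez2)
    moreover have "m (m z (m v u)) e = m z (m v u)" using zS uS vS eS by (simp add: A C ue)
    ultimately have r: "m z (m v u) = e" using primE C zS uS vS by blast
    have "m (m v (m u z)) (m v (m u z)) = m v (m u z)" using zS uS vS
      by (simp add: A C uzv2 ve2 ue2)
    moreover have "m e (m v (m u z)) = m v (m u z)" using zS uS vS by (simp add: A C ev2)
    moreover have "m (m v (m u z)) e = m v (m u z)" using zS uS vS eS by (simp add: A C ze)
    ultimately have l: "m v (m u z) = e" using primE C zS uS vS by blast
    have vuH: "m v u \<in> H" unfolding H_def
      using ve ue uS vS eS A C ev by (intro CollectI exI[of _ "m v u"]) (metis)
    show "\<exists>b\<in>H. m z b = e \<and> m b z = e"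
      using vuH r l A zS uS vS by (intro bexI[of _ "m v u"]) auto
  qed
  have sub: "subgroup_in S m H" unfolding subgroup_in_def
    using HS clos eH idH invH by blast
  have "G \<subseteq> H"
  proof
    fix g assume "g \<in> G" then have "g = m (m e g) e" "g \<in> S" using eid GS by auto
    then show "g \<in> H" unfolding H_def by blast
  qed
  hence "H = G" using maxG sub by blast
  then show ?thesis using that eG ee eid unfolding H_def by blast
qed


lemma hat_set_mem: "l \<in> hat_set X \<longleftrightarrow> (case l of Pos x \<Rightarrow> x \<in> X | Bar x \<Rightarrow> x \<in> X)"
  by (cases l) (auto simp: hat_set_def)

theorem theorem5p4:
  fixes S G :: "'a set" and m :: "'a \<Rightarrow> 'a \<Rightarrow> 'a"
    and X Y :: "'x set" and f :: "'x \<Rightarrow> 'a"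
  assumes "completely_simple S m"
    and "maximal_subgroup S m G"
    and "X \<subseteq> Y"
    and "semigroup_generators G m X f"
    and "semigroup_generators S m Y f"
  shows "loop_problem G m X f = loop_problem S m Y f \<inter> lists (hat_set X)"
proof -
  note cs = assms(1) and mx = assms(2) and XY = assms(3)
  have fG: "\<forall>x\<in>X. f x \<in> G" using assms(4) by (simp add: semigroup_generators_def)
  have GS: "G \<subseteq> S" using mx by (simp add: maximal_subgroup_def subgroup_in_def)
  have sg: "semigroup_on S m" using cs by (simp add: completely_simple_def)
  have C: "\<And>a b. a\<in>S \<Longrightarrow> b\<in>S \<Longrightarrow> m a b \<in> S" using sg by (simp add: semigroup_on_def)
  have A: "\<And>a b c. a\<in>S \<Longrightarrow> b\<in>S \<Longrightarrow> c\<in>S \<Longrightarrow> m (m a b) c = m a (m b c)"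
    using sg by (simp add: semigroup_on_def)
  obtain e where eG: "e \<in> G" and ee: "m e e = e" and eid: "\<forall>g\<in>G. m e g = g \<and> m g e = g"
    and eSe: "\<forall>x\<in>S. m (m e x) e \<in> G"
    using eSe_in_G[OF cs mx] by blast
  have eS: "e \<in> S" using eG GS by blast
  have adj: "adj1 G \<subseteq> adj1 S" using GS by (auto simp: adj1_def)
  have fwd: "loop_path G m X f a w c \<Longrightarrow> loop_path S m Y f a w c \<and> w \<in> lists (hat_set X)"
    for a w c
  proof (induction rule: loop_path.induct)
    case (nil a) then show ?case using adj by (auto intro: loop_path.nil)
  next
    case (cons a l b w c)
    have "loop_edge S m Y f a l b \<and> l \<in> hat_set X" using cons.hyps(1) adj XY
      by (cases l) (auto simp: loop_edge_def hat_set_def)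
    then show ?case using cons.IH by (auto intro: loop_path.cons)
  qed
  define \<phi> where "\<phi> = map_option (\<lambda>s. m (m e s) e)"
  have phiA: "\<phi> a \<in> adj1 G" if "a \<in> adj1 S" for a
    using that eSe by (auto simp: \<phi>_def adj1_def)
  have phim: "\<phi> (mult1 m a (Some (f x))) = mult1 m (\<phi> a) (Some (f x))"
    if "a \<in> adj1 S" "x \<in> X" for a x
  proof -
    have fxG: "f x \<in> G" using fG that by blast
    have fxS: "f x \<in> S" using fxG GS by blast
    show ?thesis
    proof (cases a)
      case None then show ?thesis using fxG eid by (simp add: \<phi>_def)
    next
      case (Some s)
      then have sS: "s \<in> S" using that by (auto simp: adj1_def)
      have "m (m e (m s (f x))) e = m (m (m e s) e) (f x)"
        using sS fxS eS fxG eid by (simp add: A C)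
      then show ?thesis using Some by (simp add: \<phi>_def)
    qed
  qed
  have bwd: "loop_path S m Y f a w c \<Longrightarrow> w \<in> lists (hat_set X) \<Longrightarrow> loop_path G m X f (\<phi> a) w (\<phi> c)"
    for a w c
  proof (induction rule: loop_path.induct)
    case (nil a) then show ?case using phiA by (auto intro: loop_path.nil)
  next
    case (cons a l b w c)
    have lX: "l \<in> hat_set X" and wX: "w \<in> lists (hat_set X)" using cons.prems by auto
    have ed: "a \<in> adj1 S" "b \<in> adj1 S" using cons.hyps(1) by (auto simp: loop_edge_def)
    have "loop_edge G m X f (\<phi> a) l (\<phi> b)"
    proof (cases l)
      case (Pos x)
      then have "x \<in> X" using lX by (simp add: hat_set_mem)
      moreover have "b = mult1 m a (Some (f x))" using Pos cons.hyps(1) by (simp add: loop_edge_def)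
      ultimately have "\<phi> b = mult1 m (\<phi> a) (Some (f x))" using phim ed by simp
      then show ?thesis using Pos \<open>x \<in> X\<close> phiA[OF ed(1)] phiA[OF ed(2)] by (simp add: loop_edge_def)
    next
      case (Bar x)
      then have "x \<in> X" using lX by (simp add: hat_set_mem)
      moreover have "a = mult1 m b (Some (f x))" using Bar cons.hyps(1) by (simp add: loop_edge_def)
      ultimately have "\<phi> a = mult1 m (\<phi> b) (Some (f x))" using phim ed by simp
      then show ?thesis using Bar \<open>x \<in> X\<close> phiA[OF ed(1)] phiA[OF ed(2)] by (simp add: loop_edge_def)
    qed
    then show ?case using cons.IH wX by (auto intro: loop_path.cons)
  qed
  have phiN: "\<phi> None = None" by (simp add: \<phi>_def)
  show ?thesis
  proof
    show "loop_problem G m X f \<subseteq> loop_problem S m Y f \<inter> lists (hat_set X)"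
      using fwd by (auto simp: loop_problem_def)
    show "loop_problem S m Y f \<inter> lists (hat_set X) \<subseteq> loop_problem G m X f"
      using bwd phiN by (fastforce simp: loop_problem_def)
  qed
qed

end
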